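(* With $W=\mathrm{des}(\pi)$ and $W^\ast=\mathrm{des}(\pi^\ast)$ as constructed in the context, \[\mathrm{Var}\bigl(\mathbb{E}(W^\ast-W\mid\pi)\bigr)\le\frac{Cn^5}{n^2\bigl(n^2-\sum_a n_a^2\bigr)^2}\] for an absolute constant $C$ (independent of $h$, $n$ and the $n_a$). Here $\mathbb{E}(\cdot\mid\pi)$ averages over the auxiliary randomness $I,J,i^\ast,j^\ast$.
   Context: Let $h\ge 2$, let $n_1,\dots,n_h$ be positive integers, $n=n_1+\dots+n_h\ge 4$, and let $\pi$ be a uniformly distributed permutation of the multiset $\{1^{n_1},\dots,h^{n_h}\}$ (a sequence $(\pi(1),\dots,\pi(n))$ in which each $a$ occurs $n_a$ times, all such sequences equally likely). $\mathrm{des}(\pi)$ is the number of $i\in\{1,\dots,n-1\}$ with $\pi(i)>\pi(i+1)$. Construction of $\pi^\ast$: Let $I$ be uniformly distributed over $\{(1,2),(2,3),\dots,(n-1,n)\}$; let $J=(a,b)$, for $h\ge a>b\ge 1$, with probability $n_an_b/\sum_{c<d}n_cn_d$; $\pi,I,J$ are independent. Write $I=(i,j)$ with $j=i+1$. If $\pi(i)>\pi(j)$, set $\pi^\ast=\pi$. If $\pi(i)\le\pi(j)$ and $J=(a,b)$: choose $i^\ast$ uniformly from $\{k:\pi(k)=a\}$ and $j^\ast$ uniformly from $\{k:\pi(k)=b\}$, independently of each other and of all else. Then: (1) if $\{i,j\}\cap\{i^\ast,j^\ast\}=\emptyset$, or $i=i^\ast,j\ne j^\ast$, or $i\ne i^\ast,j=j^\ast$,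 obtain $\pi^\ast$ from $\pi$ by exchanging the entries at positions $i$ and $i^\ast$ and exchanging the entries at positions $j$ and $j^\ast$; (2) if $i=j^\ast$ and $j=i^\ast$, exchange the entries at positions $i$ and $j$; (3) if $i=j^\ast$, $j\ne i^\ast$, set $\pi^\ast(i)=\pi(i^\ast)$, $\pi^\ast(j)=\pi(i)$, $\pi^\ast(i^\ast)=\pi(j)$, and $\pi^\ast(k)=\pi(k)$ for $k\notin\{i,j,i^\ast\}$; (4) if $i\ne j^\ast$, $j=i^\ast$, set $\pi^\ast(i)=\pi(j)$, $\pi^\ast(j)=\pi(j^\ast)$, $\pi^\ast(j^\ast)=\pi(i)$, and $\pi^\ast(k)=\pi(k)$ for $k\notin\{i,j,j^\ast\}$. *)

theory Defs
  imports "HOL-Probability.Probability"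
begin

text \<open>Sequences are lists with 0-based positions; letters are 1..h; ns a = n_a.\<close>

definition des :: "nat list \<Rightarrow> nat" where
  "des xs = card {i. Suc i < length xs \<and> xs ! i > xs ! Suc i}"

definition multiset_perms :: "nat \<Rightarrow> (nat \<Rightarrow> nat) \<Rightarrow> nat list set" where
  "multiset_perms h ns = {xs. set xs \<subseteq> {1..h} \<and> (\<forall>a\<in>{1..h}. count (mset xs) a = ns a)}"

definition positions :: "nat list \<Rightarrow> nat \<Rightarrow> nat set" where
  "positions xs a = {k. k < length xs \<and> xs ! k = a}"

definition swap_pos :: "nat list \<Rightarrow> nat \<Rightarrow> nat \<Rightarrow> nat list" where
  "swap_pos xs p q = xs[p := xs ! q, q := xs ! p]"

text \<open>The permutation pi* for I = (i, i+1), and chosen positions istar, jstar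
  (istar uniform among positions of letter a, jstar among those of b, J = (a,b)).\<close>
definition pi_star :: "nat list \<Rightarrow> nat \<Rightarrow> nat \<Rightarrow> nat \<Rightarrow> nat list" where
  "pi_star xs i istar jstar =
     (let j = Suc i in
      if xs ! i > xs ! j then xs
      else if ({i, j} \<inter> {istar, jstar} = {}) \<or> (i = istar \<and> j \<noteq> jstar) \<or> (i \<noteq> istar \<and> j = jstar)
        then swap_pos (swap_pos xs i istar) j jstar
      else if i = jstar \<and> j = istar then swap_pos xs i j
      else if i = jstar \<and> j \<noteq> istar then xs[i := xs ! istar, j := xs ! i, istar := xs ! j]
      else if i \<noteq> jstar \<and> j = istar then xs[i := xs ! j, j := xs ! jstar, jstar := xs ! i]
      else xs)"

definition Zconst :: "nat \<Rightarrow> (nat \<Rightarrow> nat) \<Rightarrow> real" where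
  "Zconst h ns = (\<Sum>(a, b) \<in> {(a, b). a \<in> {1..h} \<and> b \<in> {1..h} \<and> b < a}. real (ns a) * real (ns b))"

definition cond_exp_diff :: "nat \<Rightarrow> (nat \<Rightarrow> nat) \<Rightarrow> nat list \<Rightarrow> real" where
  "cond_exp_diff h ns xs =
     (\<Sum>i\<in>{0..<length xs - 1}. (1 / real (length xs - 1)) *
       (\<Sum>(a, b) \<in> {(a, b). a \<in> {1..h} \<and> b \<in> {1..h} \<and> b < a}.
          (real (ns a) * real (ns b) / Zconst h ns) *
          (\<Sum>istar\<in>positions xs a. \<Sum>jstar\<in>positions xs b.
             (1 / (real (ns a) * real (ns b))) *
             (real (des (pi_star xs i istar jstar)) - real (des xs)))))"

end

theory Submission
  imports Defs "HOL-Combinatorics.Multiset_Permutations"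
begin


definition avg :: "'a set \<Rightarrow> ('a \<Rightarrow> real) \<Rightarrow> real" where
  "avg A g = (\<Sum>x\<in>A. g x) / card A"

definition SS :: "'a set \<Rightarrow> ('a \<Rightarrow> real) \<Rightarrow> real" where
  "SS A g = (\<Sum>x\<in>A. (g x - avg A g)^2)"

lemma SS_decomp:
  assumes "finite A"
  shows "(\<Sum>x\<in>A. (g x - c)^2) = SS A g + card A * (avg A g - c)^2"
proof (cases "A = {}")
  case True then show ?thesis by (simp add: SS_def)
next
  case False
  let ?m = "avg A g"
  have cA: "card A > 0" using assms False by (simp add: card_gt_0_iff)
  have s: "(\<Sum>x\<in>A. g x) = card A * ?m" using cA by (simp add: avg_def)
  have "(\<Sum>x\<in>A. (g x - c)^2) = (\<Sum>x\<in>A. (g x - ?m)^2 + 2 * (?m - c) * g x - 2 * (?m - c) * ?m + (?m - c)^2)"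
    by (rule sum.cong) (auto simp: power2_eq_square algebra_simps)
  also have "\<dots> = SS A g + 2 * (?m - c) * (\<Sum>x\<in>A. g x) - card A * (2 * (?m - c) * ?m) + card A * (?m - c)^2"
    by (simp add: sum.distrib sum_subtractf SS_def sum_distrib_left)
  also have "\<dots> = SS A g + card A * (?m - c)^2" by (simp add: s algebra_simps)
  finally show ?thesis .
qed

lemma SS_le: "finite A \<Longrightarrow> SS A g \<le> (\<Sum>x\<in>A. (g x - c)^2)"
  by (simp add: SS_decomp)

lemma card_positions_count: "card {i. i < length xs \<and> xs ! i = c} = count (mset xs) c"
  by (simp only: count_mset count_list_eq_length_filter length_filter_conv_card) (rule arg_cong[where f=card], auto)

lemma swap_Cons_Suc: "swap_pos (c # ys) (Suc p) (Suc q) = c # swap_pos ys p q"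
  by (simp add: swap_pos_def)

lemma swap_Cons_0: "q < length ys \<Longrightarrow> swap_pos (c # ys) 0 (Suc q) = (ys ! q) # ys[q := c]"
  by (simp add: swap_pos_def)

abbreviation PM :: "'a multiset \<Rightarrow> 'a \<Rightarrow> 'a list set" where
  "PM M c \<equiv> permutations_of_multiset (M - {#c#})"

lemma mset_upd_swap:
  assumes "mset ys = M - {#c#}" "q < length ys" "ys ! q = c'" "c \<noteq> c'" "c \<in># M"
  shows "mset (ys[q := c]) = M - {#c'#}"
proof -
  have "c' \<in># mset ys" using assms(2,3) by (metis in_set_conv_nth set_mset_mset)
  then have "c' \<in># M" using assms(1) by (metis in_diffD)
  then show ?thesis using assms by (auto simp: mset_update multiset_eq_iff)
qed

lemma coupling:
  fixes f :: "nat list \<Rightarrow> real"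
  assumes c: "c \<in># M" and c': "c' \<in># M" and ne: "c \<noteq> c'"
    and lip: "\<And>xs p q. mset xs = M \<Longrightarrow> p < size M \<Longrightarrow> q < size M \<Longrightarrow> \<bar>f xs - f (swap_pos xs p q)\<bar> \<le> L"
  shows "\<bar>avg (PM M c') (\<lambda>ys. f (c' # ys)) - avg (PM M c) (\<lambda>ys. f (c # ys))\<bar> \<le> L"
proof -
  define A where "A = PM M c"
  define A' where "A' = PM M c'"
  define B where "B = (\<lambda>ys::nat list. {q. q < length ys \<and> ys ! q = c'})"
  define B' where "B' = (\<lambda>ys::nat list. {q. q < length ys \<and> ys ! q = c})"
  define P where "P = Sigma A B"
  define P' where "P' = Sigma A' B'"
  have finA: "finite A" "finite A'" by (simp_all add: A_def A'_def)
  have finB: "\<forall>a\<in>A. finite (B a)" "\<forall>a\<in>A'. finite (B' a)" by (simp_all add: B_def B'_def)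
  have finP: "finite P" "finite P'" using finA finB by (simp_all add: P_def P'_def)
  define k' where "k' = count M c'"
  define k where "k = count M c"
  have cB: "card (B ys) = k'" if "ys \<in> A" for ys
  proof -
    have "mset ys = M - {#c#}" using that by (simp add: A_def permutations_of_multiset_def)
    then show ?thesis using ne unfolding B_def k'_def card_positions_count by simp
  qed
  have cB': "card (B' ys) = k" if "ys \<in> A'" for ys
  proof -
    have "mset ys = M - {#c'#}" using that by (simp add: A'_def permutations_of_multiset_def)
    then show ?thesis using ne unfolding B'_def k_def card_positions_count by simp
  qed
  have s1: "(\<Sum>z\<in>P. f (c # fst z)) = k' * (\<Sum>ys\<in>A. f (c # ys))"
  proof -
    have "(\<Sum>z\<in>P. f (c # fst z)) = (\<Sum>ys\<in>A. \<Sum>q\<in>B ys. f (c # ys))"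
      unfolding P_def by (subst sum.Sigma) (use finA finB in \<open>auto simp: split_def\<close>)
    also have "\<dots> = (\<Sum>ys\<in>A. k' * f (c # ys))" by (rule sum.cong) (auto simp: cB)
    finally show ?thesis by (simp add: sum_distrib_left)
  qed
  have c1: "card P = k' * card A" unfolding P_def using finA finB cB by simp
  have s2: "(\<Sum>z\<in>P'. f (c' # fst z)) = k * (\<Sum>ys\<in>A'. f (c' # ys))"
  proof -
    have "(\<Sum>z\<in>P'. f (c' # fst z)) = (\<Sum>ys\<in>A'. \<Sum>q\<in>B' ys. f (c' # ys))"
      unfolding P'_def by (subst sum.Sigma) (use finA finB in \<open>auto simp: split_def\<close>)
    also have "\<dots> = (\<Sum>ys\<in>A'. k * f (c' # ys))" by (rule sum.cong) (auto simp: cB')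
    finally show ?thesis by (simp add: sum_distrib_left)
  qed
  have c2: "card P' = k * card A'" unfolding P'_def using finA finB cB' by simp
  have bij: "(\<Sum>z\<in>P. g ((fst z)[snd z := c], snd z)) = (\<Sum>z\<in>P'. g z)" for g :: "nat list \<times> nat \<Rightarrow> real"
  proof (rule sum.reindex_bij_witness[where j = "\<lambda>(ys, q). (ys[q := c], q)" and i = "\<lambda>(zs, q). (zs[q := c'], q)"])
    fix a assume "a \<in> P" then show "(case (case a of (ys, q) \<Rightarrow> (ys[q := c], q)) of (zs, q) \<Rightarrow> (zs[q := c'], q)) = a"
      by (auto simp: P_def B_def)
  next
    fix a assume "a \<in> P" then show "(case a of (ys, q) \<Rightarrow> (ys[q := c], q)) \<in> P'"
      using mset_upd_swap[OF _ _ _ ne c]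
      by (auto simp: P_def B_def P'_def B'_def A_def A'_def permutations_of_multiset_def)
  next
    fix b assume "b \<in> P'" then show "(case (case b of (zs, q) \<Rightarrow> (zs[q := c'], q)) of (ys, q) \<Rightarrow> (ys[q := c], q)) = b"
      by (auto simp: P'_def B'_def)
  next
    fix b assume "b \<in> P'" then show "(case b of (zs, q) \<Rightarrow> (zs[q := c'], q)) \<in> P"
      using mset_upd_swap[OF _ _ _ ne[symmetric] c']
      by (auto simp: P_def B_def P'_def B'_def A_def A'_def permutations_of_multiset_def)
  next
    fix a assume "a \<in> P" then show "g (case a of (ys, q) \<Rightarrow> (ys[q := c], q)) = g ((fst a)[snd a := c], snd a)"
      by (simp add: split_def)
  qed
  have cP: "card P' = card P" using bij[of "\<lambda>_. 1"] by simp
  have s3: "(\<Sum>z\<in>P. f (c' # (fst z)[snd z := c])) = (\<Sum>z\<in>P'. f (c' # fst z))"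
    using bij[of "\<lambda>z. f (c' # fst z)"] by simp
  have kpos: "k > 0" "k' > 0" using c c' by (simp_all add: k_def k'_def)
  have Ane: "A \<noteq> {}" "A' \<noteq> {}" by (simp_all add: A_def A'_def)
  have cApos: "card A > 0" "card A' > 0" using finA Ane by (simp_all add: card_gt_0_iff)
  have cPpos: "card P > 0" using c1 kpos cApos by simp
  have a1: "avg A (\<lambda>ys. f (c # ys)) = (\<Sum>z\<in>P. f (c # fst z)) / card P"
    using kpos by (simp add: avg_def s1 c1)
  have a2: "avg A' (\<lambda>ys. f (c' # ys)) = (\<Sum>z\<in>P. f (c' # (fst z)[snd z := c])) / card P"
    using kpos by (simp add: avg_def s3 s2 c2 cP[symmetric])
  have d: "\<bar>f (c' # (fst z)[snd z := c]) - f (c # fst z)\<bar> \<le> L" if "z \<in> P" for z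
  proof -
    obtain ys q where z: "z = (ys, q)" by (cases z)
    have ys: "mset ys = M - {#c#}" "q < length ys" "ys ! q = c'" using that
      by (auto simp: z P_def A_def B_def permutations_of_multiset_def)
    have m: "mset (c # ys) = M" using ys(1) c by simp
    have sz: "size M = Suc (length ys)" using m by (metis length_Cons size_mset)
    have "swap_pos (c # ys) 0 (Suc q) = c' # ys[q := c]" using ys swap_Cons_0 by simp
    then have "\<bar>f (c # ys) - f (c' # ys[q := c])\<bar> \<le> L" using lip[OF m, of 0 "Suc q"] sz ys(2) by simp
    then show ?thesis by (simp add: z abs_minus_commute)
  qed
  have "\<bar>(\<Sum>z\<in>P. f (c' # (fst z)[snd z := c])) - (\<Sum>z\<in>P. f (c # fst z))\<bar> \<le> card P * L"
  proof -
    have "\<bar>(\<Sum>z\<in>P. f (c' # (fst z)[snd z := c])) - (\<Sum>z\<in>P. f (c # fst z))\<bar>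
       = \<bar>\<Sum>z\<in>P. f (c' # (fst z)[snd z := c]) - f (c # fst z)\<bar>" by (simp add: sum_subtractf)
    also have "\<dots> \<le> (\<Sum>z\<in>P. \<bar>f (c' # (fst z)[snd z := c]) - f (c # fst z)\<bar>)" by (rule sum_abs)
    also have "\<dots> \<le> (\<Sum>z\<in>P. L)" by (rule sum_mono) (use d in auto)
    finally show ?thesis by simp
  qed
  then show ?thesis unfolding A_def[symmetric] A'_def[symmetric] a1 a2 using cPpos
    by (simp add: diff_divide_distrib[symmetric] abs_divide pos_divide_le_eq mult.commute)
qed



lemma SS_reindex_Cons: "SS ((#) c ` A) f = SS A (\<lambda>ys. f (c # ys))"
proof -
  have inj: "inj_on ((#) c) A" by (simp add: inj_on_def)
  have "avg ((#) c ` A) f = avg A (\<lambda>ys. f (c # ys))"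
    by (simp add: avg_def sum.reindex[OF inj] card_image[OF inj])
  then show ?thesis by (simp add: SS_def sum.reindex[OF inj])
qed

lemma var_perm:
  fixes f :: "nat list \<Rightarrow> real"
  shows "\<forall>(M::nat multiset) (f::nat list \<Rightarrow> real) (L::real). size M = n \<longrightarrow>
    (\<forall>xs p q. mset xs = M \<longrightarrow> p < n \<longrightarrow> q < n \<longrightarrow> \<bar>f xs - f (swap_pos xs p q)\<bar> \<le> L) \<longrightarrow>
    SS (permutations_of_multiset M) f \<le> card (permutations_of_multiset M) * n * L^2"
proof (induction n)
  case 0
  then show ?case by (auto simp: SS_def avg_def)
next
  case (Suc n)
  show ?case
  proof (intro allI impI)
    fix M :: "nat multiset" and f :: "nat list \<Rightarrow> real" and L
    assume sz: "size M = Suc n"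
      and lip: "\<forall>xs p q. mset xs = M \<longrightarrow> p < Suc n \<longrightarrow> q < Suc n \<longrightarrow> \<bar>f xs - f (swap_pos xs p q)\<bar> \<le> L"
    have Mne: "M \<noteq> {#}" using sz by auto
    then obtain c0 where c0: "c0 \<in># M" by auto
    let ?S = "permutations_of_multiset M"
    define m where "m c = avg (PM M c) (\<lambda>ys. f (c # ys))" for c
    have decomp: "?S = (\<Union>c\<in>set_mset M. (#) c ` PM M c)"
      by (rule permutations_of_multiset_nonempty[OF Mne])
    have disj: "\<forall>c\<in>set_mset M. \<forall>d\<in>set_mset M. c \<noteq> d \<longrightarrow> (#) c ` PM M c \<inter> (#) d ` PM M d = {}"
      by auto
    have sumdec: "(\<Sum>x\<in>?S. g x) = (\<Sum>c\<in>set_mset M. \<Sum>ys\<in>PM M c. g (c # ys))" for g :: "nat list \<Rightarrow> real"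
    proof -
      have "(\<Sum>x\<in>?S. g x) = (\<Sum>c\<in>set_mset M. \<Sum>x\<in>(#) c ` PM M c. g x)"
        unfolding decomp by (rule sum.UNION_disjoint) (use disj in auto)
      also have "\<dots> = (\<Sum>c\<in>set_mset M. \<Sum>ys\<in>PM M c. g (c # ys))"
        by (rule sum.cong) (auto simp: sum.reindex inj_on_def)
      finally show ?thesis .
    qed
    have L0: "0 \<le> L" using lip c0
    proof -
      obtain xs where "mset xs = M" using ex_mset by blast
      then have "\<bar>f xs - f (swap_pos xs 0 0)\<bar> \<le> L" using lip by auto
      then show ?thesis by simp
    qed
    have IH: "SS (PM M c) (\<lambda>ys. f (c # ys)) \<le> card (PM M c) * n * L^2" if c: "c \<in># M" for c
    proof -
      have "size (M - {#c#}) = n" using sz c by (simp add: size_Diff_submset)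
      moreover have "\<forall>xs p q. mset xs = M - {#c#} \<longrightarrow> p < n \<longrightarrow> q < n \<longrightarrow>
          \<bar>f (c # xs) - f (c # swap_pos xs p q)\<bar> \<le> L"
      proof (intro allI impI)
        fix xs p q assume "mset xs = M - {#c#}" "p < n" "q < n"
        then have "mset (c # xs) = M" using c by simp
        then have "\<bar>f (c # xs) - f (swap_pos (c # xs) (Suc p) (Suc q))\<bar> \<le> L"
          using lip \<open>p < n\<close> \<open>q < n\<close> by auto
        then show "\<bar>f (c # xs) - f (c # swap_pos xs p q)\<bar> \<le> L" by (simp add: swap_Cons_Suc)
      qed
      ultimately show ?thesis using Suc.IH[rule_format, of "M - {#c#}" "\<lambda>ys. f (c # ys)" L] by simp
    qed
    have mdiff: "(m c - m c0)^2 \<le> L^2" if c: "c \<in># M" for c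
    proof (cases "c = c0")
      case True then show ?thesis by simp
    next
      case False
      have "\<bar>m c - m c0\<bar> \<le> L" unfolding m_def
        by (rule coupling[OF c0 c False[symmetric]]) (use lip sz in auto)
      then show ?thesis by (metis abs_le_square_iff abs_of_nonneg L0)
    qed
    have "SS ?S f \<le> (\<Sum>x\<in>?S. (f x - m c0)^2)" by (rule SS_le) simp
    also have "\<dots> = (\<Sum>c\<in>set_mset M. \<Sum>ys\<in>PM M c. (f (c # ys) - m c0)^2)" by (rule sumdec)
    also have "\<dots> = (\<Sum>c\<in>set_mset M. SS (PM M c) (\<lambda>ys. f (c # ys)) + card (PM M c) * (m c - m c0)^2)"
      by (rule sum.cong) (auto simp: SS_decomp m_def)
    also have "\<dots> \<le> (\<Sum>c\<in>set_mset M. card (PM M c) * n * L^2 + card (PM M c) * L^2)"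
      by (rule sum_mono) (use IH mdiff in \<open>auto intro!: add_mono mult_left_mono\<close>)
    also have "\<dots> = (\<Sum>c\<in>set_mset M. real (card (PM M c))) * Suc n * L^2"
      by (simp add: sum_distrib_right sum_distrib_left sum.distrib algebra_simps)
    also have "(\<Sum>c\<in>set_mset M. real (card (PM M c))) = card ?S"
      using sumdec[of "\<lambda>_. 1"] by simp
    finally show "SS ?S f \<le> card ?S * Suc n * L^2" by (simp add: algebra_simps)
  qed
qed



definition sw :: "nat \<Rightarrow> nat \<Rightarrow> nat \<Rightarrow> nat" where
  "sw p q k = (if k = p then q else if k = q then p else k)"

lemma sw_sw[simp]: "sw p q (sw p q k) = k" by (simp add: sw_def)
lemma sw_eq_iff: "sw p q s = k \<longleftrightarrow> s = sw p q k" by (auto simp: sw_def)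
lemma sw_lt: "p < n \<Longrightarrow> q < n \<Longrightarrow> k < n \<Longrightarrow> sw p q k < n" by (simp add: sw_def)

lemma length_swap_pos[simp]: "length (swap_pos xs p q) = length xs" by (simp add: swap_pos_def)

lemma nth_swap_pos: "p < length xs \<Longrightarrow> q < length xs \<Longrightarrow> k < length xs \<Longrightarrow> swap_pos xs p q ! k = xs ! sw p q k"
  by (auto simp: swap_pos_def sw_def nth_list_update)

lemma swap_swap:
  assumes "p < length xs" "q < length xs" "a < length xs" "b < length xs"
  shows "swap_pos (swap_pos xs a b) p q = swap_pos (swap_pos xs p q) (sw p q a) (sw p q b)"
proof (rule nth_equalityI)
  fix k assume "k < length (swap_pos (swap_pos xs a b) p q)"
  then have k: "k < length xs" by simp
  show "swap_pos (swap_pos xs a b) p q ! k = swap_pos (swap_pos xs p q) (sw p q a) (sw p q b) ! k"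
    using assms k by (simp add: nth_swap_pos sw_lt) (simp add: sw_def)
qed simp

lemma swap_upd:
  assumes "p < length xs" "q < length xs" "a < length xs"
  shows "swap_pos (xs[a := v]) p q = (swap_pos xs p q)[sw p q a := v]"
proof (rule nth_equalityI)
  fix k assume "k < length (swap_pos (xs[a := v]) p q)"
  then have k: "k < length xs" by simp
  show "swap_pos (xs[a := v]) p q ! k = (swap_pos xs p q)[sw p q a := v] ! k"
    using assms k by (simp add: nth_swap_pos sw_lt nth_list_update) (auto simp: sw_def)
qed simp

lemma pi_star_swap:
  assumes p: "p < length xs" and q: "q < length xs" and j: "Suc i < length xs"
    and ip: "i \<noteq> p" "i \<noteq> q" "Suc i \<noteq> p" "Suc i \<noteq> q"
    and s: "s < length xs" and t: "t < length xs"
  shows "pi_star (swap_pos xs p q) i (sw p q s) (sw p q t) = swap_pos (pi_star xs i s t) p q"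
proof -
  have i: "i < length xs" using j by simp
  have si: "sw p q i = i" "sw p q (Suc i) = Suc i" using ip by (auto simp: sw_def)
  have e: "swap_pos xs p q ! i = xs ! i" "swap_pos xs p q ! Suc i = xs ! Suc i"
    "swap_pos xs p q ! sw p q s = xs ! s" "swap_pos xs p q ! sw p q t = xs ! t"
    using p q i j s t si by (simp_all add: nth_swap_pos sw_lt)
  have c: "(sw p q s = i) = (s = i)" "(sw p q s = Suc i) = (s = Suc i)"
     "(sw p q t = i) = (t = i)" "(sw p q t = Suc i) = (t = Suc i)"
     "(i = sw p q s) = (i = s)" "(Suc i = sw p q s) = (Suc i = s)"
     "(i = sw p q t) = (i = t)" "(Suc i = sw p q t) = (Suc i = t)"
    using si by (metis sw_sw)+
  note G = swap_swap[of p _ q] 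
  note U = swap_upd[of p _ q]
  show ?thesis
    unfolding pi_star_def Let_def
    using p q i j s t ip e c si
    by (auto simp: G U sw_lt)
qed



lemma des_sum: "real (des xs) = (\<Sum>k<length xs - 1. if xs ! Suc k < xs ! k then 1 else 0)"
proof -
  have "{i. Suc i < length xs \<and> xs ! i > xs ! Suc i} = {k\<in>{..<length xs - 1}. xs ! Suc k < xs ! k}" by auto
  then have "real (des xs) = (\<Sum>k\<in>{k\<in>{..<length xs - 1}. xs ! Suc k < xs ! k}. 1)"
    by (simp add: des_def)
  also have "\<dots> = (\<Sum>k<length xs - 1. if xs ! Suc k < xs ! k then 1 else 0)"
    by (rule sum.inter_filter) simp
  finally show ?thesis .
qed

lemma des_local:
  assumes len: "length r = length x" and agree: "\<And>k. k < length x \<Longrightarrow> k \<notin> P \<Longrightarrow> r ! k = x ! k"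
    and p: "p < length x" and q: "q < length x"
    and far: "\<And>k. k \<in> P \<Longrightarrow> k \<noteq> p \<and> k \<noteq> q \<and> Suc k \<noteq> p \<and> Suc k \<noteq> q \<and> k \<noteq> Suc p \<and> k \<noteq> Suc q"
  shows "real (des (swap_pos r p q)) - real (des (swap_pos x p q)) = real (des r) - real (des x)"
proof -
  let ?D = "\<lambda>(y::nat list) k. (if y ! Suc k < y ! k then 1 else 0::real)"
  have "?D (swap_pos r p q) k - ?D (swap_pos x p q) k = ?D r k - ?D x k" if k: "k < length x - 1" for k
  proof (cases "k \<noteq> p \<and> k \<noteq> q \<and> Suc k \<noteq> p \<and> Suc k \<noteq> q")
    case True
    then have "sw p q k = k" "sw p q (Suc k) = Suc k" by (auto simp: sw_def)
    then show ?thesis using k len p q by (simp add: nth_swap_pos)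
  next
    case False
    then have nk: "k \<notin> P" "Suc k \<notin> P" using far by (metis Suc_inject)+
    have "sw p q k \<notin> P" "sw p q (Suc k) \<notin> P" using nk far unfolding sw_def
      by (metis p q)+
    then show ?thesis using k len p q nk agree sw_lt[OF p q]
      by (simp add: nth_swap_pos)
  qed
  then show ?thesis using len by (simp add: des_sum sum_subtractf[symmetric])
qed

lemma des_bound:
  assumes len: "length r = length x" and agree: "\<And>k. k < length x \<Longrightarrow> k \<notin> P \<Longrightarrow> r ! k = x ! k"
    and fin: "finite P"
  shows "\<bar>real (des r) - real (des x)\<bar> \<le> 2 * real (card P)"
proof -
  let ?D = "\<lambda>(y::nat list) k. (if y ! Suc k < y ! k then 1 else 0::real)"
  let ?Q = "P \<union> (\<lambda>k. k - 1) ` P"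
  have "\<bar>real (des r) - real (des x)\<bar> = \<bar>\<Sum>k<length x - 1. ?D r k - ?D x k\<bar>"
    using len by (simp add: des_sum sum_subtractf)
  also have "\<dots> \<le> (\<Sum>k<length x - 1. \<bar>?D r k - ?D x k\<bar>)" by (rule sum_abs)
  also have "\<dots> \<le> (\<Sum>k<length x - 1. if k \<in> ?Q then 1 else 0)"
  proof (rule sum_mono)
    fix k assume k: "k \<in> {..<length x - 1}"
    show "\<bar>?D r k - ?D x k\<bar> \<le> (if k \<in> ?Q then 1 else 0)"
    proof (cases "k \<in> ?Q")
      case False
      then have "k \<notin> P" "Suc k \<notin> P" by (auto simp: image_iff)
      then show ?thesis using agree k False by simp
    qed simp
  qed
  also have "\<dots> = card ({..<length x - 1} \<inter> ?Q)"
    by (simp add: sum.If_cases) (rule arg_cong[where f=card], auto)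
  also have "\<dots> \<le> card ?Q" using fin by (simp add: card_mono)
  also have "\<dots> \<le> card P + card ((\<lambda>k. k - 1) ` P)" using card_Un_le[of P "(\<lambda>k. k - 1) ` P"] by linarith
  also have "\<dots> \<le> card P + card P" using card_image_le[OF fin] by simp
  finally show ?thesis by simp
qed

lemma pi_star_agree:
  shows "length (pi_star x i s t) = length x"
    and "k \<notin> {i, Suc i, s, t} \<Longrightarrow> pi_star x i s t ! k = x ! k"
  by (auto simp: pi_star_def Let_def swap_pos_def nth_list_update)

lemma Delta_bound: "\<bar>real (des (pi_star x i s t)) - real (des x)\<bar> \<le> 8"
proof -
  have "\<bar>real (des (pi_star x i s t)) - real (des x)\<bar> \<le> 2 * real (card {i, Suc i, s, t})"
    by (rule des_bound) (auto simp: pi_star_agree)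
  also have "card {i, Suc i, s, t} \<le> 4" using card_length[of "[i, Suc i, s, t]"] by simp
  then have "2 * real (card {i, Suc i, s, t}) \<le> 8" by simp
  finally show ?thesis .
qed



definition Dl :: "nat list \<Rightarrow> nat \<Rightarrow> nat \<Rightarrow> nat \<Rightarrow> real" where
  "Dl x i s t = real (des (pi_star x i s t)) - real (des x)"

definition Tsum :: "nat list \<Rightarrow> real" where
  "Tsum x = (\<Sum>i<length x - 1. \<Sum>s<length x. \<Sum>t<length x. if x ! t < x ! s then Dl x i s t else 0)"

lemma sum_reindex_sw:
  assumes "p < n" "q < n"
  shows "(\<Sum>s<n. g s) = (\<Sum>s<n. g (sw p q s) :: real)"
  by (rule sum.reindex_bij_witness[where i = "sw p q" and j = "sw p q"]) (use assms in \<open>auto simp: sw_lt\<close>)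

lemma sum2_reindex_sw:
  assumes "p < n" "q < n"
  shows "(\<Sum>s<n. \<Sum>t<n. G s t) = (\<Sum>s<n. \<Sum>t<n. G (sw p q s) (sw p q t) :: real)"
proof -
  have "(\<Sum>s<n. \<Sum>t<n. G s t) = (\<Sum>s<n. \<Sum>t<n. G (sw p q s) t)"
    using sum_reindex_sw[OF assms, of "\<lambda>s. \<Sum>t<n. G s t"] by simp
  also have "\<dots> = (\<Sum>s<n. \<Sum>t<n. G (sw p q s) (sw p q t))"
    by (rule sum.cong[OF refl]) (rule sum_reindex_sw[OF assms])
  finally show ?thesis .
qed

lemma sum_ind_le: "finite X \<Longrightarrow> finite A \<Longrightarrow> (\<Sum>k\<in>A. if k \<in> X then 1 else 0 :: real) \<le> card X"
  by (simp add: sum.If_cases card_mono)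

definition Fk :: "nat \<Rightarrow> nat \<Rightarrow> nat \<Rightarrow> bool" where
  "Fk p q k = (k \<noteq> p \<and> k \<noteq> q \<and> Suc k \<noteq> p \<and> Suc k \<noteq> q \<and> k \<noteq> Suc p \<and> k \<noteq> Suc q)"

lemma Dl_swap:
  assumes p: "p < length x" and q: "q < length x" and i: "Suc i < length x"
    and s: "s < length x" and t: "t < length x"
    and F: "Fk p q i" "Fk p q (Suc i)" "Fk p q s" "Fk p q t"
  shows "Dl (swap_pos x p q) i (sw p q s) (sw p q t) = Dl x i s t"
proof -
  have e: "pi_star (swap_pos x p q) i (sw p q s) (sw p q t) = swap_pos (pi_star x i s t) p q"
    by (rule pi_star_swap) (use assms in \<open>auto simp: Fk_def\<close>)
  show ?thesis unfolding Dl_def e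
    by (rule des_local[where P = "{i, Suc i, s, t}"]) (use assms in \<open>auto simp: pi_star_agree Fk_def\<close>)
qed

lemma Dl_bound: "\<bar>Dl x i s t\<bar> \<le> 8" unfolding Dl_def by (rule Delta_bound)

lemma lin3: "(a::real) \<le> c \<Longrightarrow> b \<le> d \<Longrightarrow> 16 * (b + a + a) \<le> 16 * (d + c + c)" by (intro mult_left_mono add_mono) auto

lemma T_lip:
  assumes p: "p < length x" and q: "q < length x"
  shows "\<bar>Tsum x - Tsum (swap_pos x p q)\<bar> \<le> 320 * real (length x) ^ 2"
proof -
  define n where "n = length x"
  define x' where "x' = swap_pos x p q"
  have pn: "p < n" "q < n" using p q by (simp_all add: n_def)
  have lx': "length x' = n" by (simp add: x'_def n_def)
  have nth': "x' ! sw p q s = x ! s" if "s < n" for s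
    using that pn by (simp add: x'_def n_def nth_swap_pos sw_lt)
  define term1 where "term1 i s t = (if x ! t < x ! s then Dl x i s t else 0)" for i s t
  define term2 where "term2 i s t = (if x ! t < x ! s then Dl x' i (sw p q s) (sw p q t) else 0)" for i s t
  have T1: "Tsum x = (\<Sum>i<n - 1. \<Sum>s<n. \<Sum>t<n. term1 i s t)"
    by (simp add: Tsum_def term1_def n_def)
  have T2: "Tsum x' = (\<Sum>i<n - 1. \<Sum>s<n. \<Sum>t<n. term2 i s t)"
  proof -
    have "Tsum x' = (\<Sum>i<n - 1. \<Sum>s<n. \<Sum>t<n. if x' ! t < x' ! s then Dl x' i s t else 0)"
      by (simp add: Tsum_def lx')
    also have "\<dots> = (\<Sum>i<n - 1. \<Sum>s<n. \<Sum>t<n. term2 i s t)"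
    proof (rule sum.cong[OF refl])
      fix i
      have "(\<Sum>s<n. \<Sum>t<n. if x' ! t < x' ! s then Dl x' i s t else 0)
          = (\<Sum>s<n. \<Sum>t<n. if x' ! sw p q t < x' ! sw p q s then Dl x' i (sw p q s) (sw p q t) else 0)"
        by (rule sum2_reindex_sw[OF pn])
      also have "\<dots> = (\<Sum>s<n. \<Sum>t<n. term2 i s t)"
        by (rule sum.cong[OF refl], rule sum.cong[OF refl]) (simp add: term2_def nth')
      finally show "(\<Sum>s<n. \<Sum>t<n. if x' ! t < x' ! s then Dl x' i s t else 0) = (\<Sum>s<n. \<Sum>t<n. term2 i s t)" .
    qed
    finally show ?thesis .
  qed
  define BI where "BI = {p, q, p - 1, q - 1, p - 2, q - 2, Suc p, Suc q}"
  define BS where "BS = {p, q, p - 1, q - 1, Suc p, Suc q}"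
  have cBI: "card BI \<le> 8" unfolding BI_def using card_length[of "[p, q, p - 1, q - 1, p - 2, q - 2, Suc p, Suc q]"] by simp
  have cBS: "card BS \<le> 6" unfolding BS_def using card_length[of "[p, q, p - 1, q - 1, Suc p, Suc q]"] by simp
  define ind where "ind (X::nat set) (k::nat) = (if k \<in> X then 1 else 0 :: real)" for X k
  have tb: "\<bar>term1 i s t - term2 i s t\<bar> \<le> 16 * (ind BI i + ind BS s + ind BS t)"
    if i: "i < n - 1" and s: "s < n" and t: "t < n" for i s t
  proof (cases "i \<in> BI \<or> s \<in> BS \<or> t \<in> BS")
    case True
    have "\<bar>term1 i s t - term2 i s t\<bar> \<le> 16"
      unfolding term1_def term2_def using Dl_bound[of x i s t] Dl_bound[of x' i "sw p q s" "sw p q t"]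
      by (auto simp: abs_if split: if_splits)
    moreover have "1 \<le> ind BI i + ind BS s + ind BS t" using True by (auto simp: ind_def)
    then have "16 \<le> 16 * (ind BI i + ind BS s + ind BS t)" by simp
    ultimately show ?thesis by linarith
  next
    case False
    then have F: "Fk p q i" "Fk p q (Suc i)" "Fk p q s" "Fk p q t"
      by (auto simp: Fk_def BI_def BS_def)
    have "Dl x' i (sw p q s) (sw p q t) = Dl x i s t" unfolding x'_def
      by (rule Dl_swap) (use i s t p q F in \<open>auto simp: n_def\<close>)
    then show ?thesis by (simp add: term1_def term2_def ind_def)
  qed
  have "\<bar>Tsum x - Tsum x'\<bar> = \<bar>\<Sum>i<n - 1. \<Sum>s<n. \<Sum>t<n. term1 i s t - term2 i s t\<bar>"
    by (simp add: T1 T2 sum_subtractf)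
  also have "\<dots> \<le> (\<Sum>i<n - 1. \<Sum>s<n. \<Sum>t<n. 16 * (ind BI i + ind BS s + ind BS t))"
  proof -
    have "\<bar>\<Sum>i<n - 1. \<Sum>s<n. \<Sum>t<n. term1 i s t - term2 i s t\<bar> \<le> (\<Sum>i<n - 1. \<bar>\<Sum>s<n. \<Sum>t<n. term1 i s t - term2 i s t\<bar>)"
      by (rule sum_abs)
    also have "\<dots> \<le> (\<Sum>i<n - 1. \<Sum>s<n. \<bar>\<Sum>t<n. term1 i s t - term2 i s t\<bar>)"
      by (rule sum_mono, rule sum_abs)
    also have "\<dots> \<le> (\<Sum>i<n - 1. \<Sum>s<n. \<Sum>t<n. \<bar>term1 i s t - term2 i s t\<bar>)"
      by (rule sum_mono, rule sum_mono, rule sum_abs)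
    also have "\<dots> \<le> (\<Sum>i<n - 1. \<Sum>s<n. \<Sum>t<n. 16 * (ind BI i + ind BS s + ind BS t))"
      by (rule sum_mono, rule sum_mono, rule sum_mono) (use tb in auto)
    finally show ?thesis .
  qed
  also have "\<dots> = 16 * (real n * real n * (\<Sum>i<n - 1. ind BI i) + real (n - 1) * real n * (\<Sum>s<n. ind BS s)
       + real (n - 1) * real n * (\<Sum>t<n. ind BS t))"
    by (simp add: sum.distrib sum_distrib_left sum_distrib_right algebra_simps)
  also have "\<dots> \<le> 16 * (real n * real n * 8 + real n * real n * 6 + real n * real n * 6)"
  proof -
    have a: "(\<Sum>i<n - 1. ind BI i) \<le> 8" using sum_ind_le[of BI "{..<n - 1}"] cBI
      by (simp add: ind_def BI_def)
    have b: "(\<Sum>s<n. ind BS s) \<le> 6" using sum_ind_le[of BS "{..<n}"] cBS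
      by (simp add: ind_def BS_def)
    have c0: "0 \<le> (\<Sum>i<n - 1. ind BI i)" "0 \<le> (\<Sum>s<n. ind BS s)" by (auto simp: ind_def intro: sum_nonneg)
    have nn: "real (n - 1) \<le> real n" by simp
    have "real (n - 1) * real n * (\<Sum>s<n. ind BS s) \<le> real n * real n * 6"
      by (rule mult_mono[OF mult_right_mono[OF nn]]) (use b c0 in auto)
    moreover have "real n * real n * (\<Sum>i<n - 1. ind BI i) \<le> real n * real n * 8"
      by (rule mult_left_mono) (use a in auto)
    ultimately show ?thesis by (rule lin3)
  qed
  also have "\<dots> = 320 * real (length x) ^ 2" by (simp add: n_def power2_eq_square)
  finally show ?thesis by (simp add: x'_def)
qed



lemma sq_sum_pairs:
  fixes x :: "nat \<Rightarrow> real"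
  shows "(\<Sum>a=1..h. x a)^2 = (\<Sum>a=1..h. (x a)^2) + 2 * (\<Sum>a=1..h. \<Sum>b\<in>{1..<a}. x a * x b)"
proof (induction h)
  case 0 then show ?case by simp
next
  case (Suc h)
  have e: "{1..<Suc h} = {1..h}" by auto
  have A: "(\<Sum>a=1..Suc h. (x a)^2) = (\<Sum>a=1..h. (x a)^2) + (x (Suc h))^2" by simp
  have B: "(\<Sum>a=1..Suc h. \<Sum>b\<in>{1..<a}. x a * x b) = (\<Sum>a=1..h. \<Sum>b\<in>{1..<a}. x a * x b) + x (Suc h) * (\<Sum>a=1..h. x a)"
    by (simp add: atLeastLessThanSuc_atLeastAtMost sum_distrib_left)
  have C: "(\<Sum>a=1..Suc h. x a) = (\<Sum>a=1..h. x a) + x (Suc h)" by simp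
  show ?case unfolding A B C power2_sum Suc.IH by (simp add: algebra_simps)
qed

lemma Pairs_Sigma: "{(a, b). a \<in> {1..(h::nat)} \<and> b \<in> {1..h} \<and> b < a} = Sigma {1..h} (\<lambda>a. {1..<a})"
  by auto

lemma sum_scale: "(\<Sum>i\<in>A. (1 / u) * ((1 / v) * g i)) = sum g A / (u * (v::real))"
  by (simp add: sum_divide_distrib)


lemma Zconst_eq: "2 * Zconst h ns = (\<Sum>a=1..h. real (ns a))^2 - (\<Sum>a=1..h. real (ns a)^2)"
proof -
  have "Zconst h ns = (\<Sum>a=1..h. \<Sum>b\<in>{1..<a}. real (ns a) * real (ns b))"
    unfolding Zconst_def Pairs_Sigma by (subst sum.Sigma) auto
  then show ?thesis using sq_sum_pairs[of "\<lambda>a. real (ns a)" h] by simp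
qed

lemma pair_reindex:
  assumes set: "set xs \<subseteq> {1..h}"
  shows "(\<Sum>(a, b) \<in> {(a, b). a \<in> {1..h} \<and> b \<in> {1..h} \<and> b < a}. \<Sum>s\<in>positions xs a. \<Sum>t\<in>positions xs b. D s t)
       = (\<Sum>s<length xs. \<Sum>t<length xs. if xs ! t < xs ! s then D s t else (0::real))"
proof -
  let ?P = "{(a, b). a \<in> {1..h} \<and> b \<in> {1..h} \<and> b < a}"
  let ?Q = "{(s, t). s < length xs \<and> t < length xs \<and> xs ! t < xs ! s}"
  have finP: "finite ?P" by (rule finite_subset[of _ "{1..h} \<times> {1..h}"]) auto
  have finQ: "finite ?Q" by (rule finite_subset[of _ "{..<length xs} \<times> {..<length xs}"]) auto
  have img: "(\<lambda>(s, t). (xs ! s, xs ! t)) ` ?Q \<subseteq> ?P"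
    using set by (auto dest!: nth_mem)
  have "(\<Sum>z\<in>?Q. case z of (s, t) \<Rightarrow> D s t) = (\<Sum>y\<in>?P. \<Sum>z\<in>{z. z \<in> ?Q \<and> (case z of (s, t) \<Rightarrow> (xs ! s, xs ! t)) = y}. case z of (s, t) \<Rightarrow> D s t)"
    by (rule sum.group[symmetric, OF finQ finP img])
  also have "\<dots> = (\<Sum>(a, b)\<in>?P. \<Sum>s\<in>positions xs a. \<Sum>t\<in>positions xs b. D s t)"
  proof (rule sum.cong[OF refl])
    fix y assume y: "y \<in> ?P"
    obtain a b where ab: "y = (a, b)" by (cases y)
    have "{z. z \<in> ?Q \<and> (case z of (s, t) \<Rightarrow> (xs ! s, xs ! t)) = y} = positions xs a \<times> positions xs b"
      using y by (auto simp: ab positions_def)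
    moreover have "finite (positions xs a)" "finite (positions xs b)" by (auto simp: positions_def)
    ultimately show "(\<Sum>z\<in>{z. z \<in> ?Q \<and> (case z of (s, t) \<Rightarrow> (xs ! s, xs ! t)) = y}. case z of (s, t) \<Rightarrow> D s t)
        = (case y of (a, b) \<Rightarrow> \<Sum>s\<in>positions xs a. \<Sum>t\<in>positions xs b. D s t)"
      by (simp add: ab sum.cartesian_product)
  qed
  finally have 1: "(\<Sum>(a, b)\<in>?P. \<Sum>s\<in>positions xs a. \<Sum>t\<in>positions xs b. D s t) = (\<Sum>(s, t)\<in>?Q. D s t)" by simp
  have "(\<Sum>(s, t)\<in>?Q. D s t) = (\<Sum>(s, t)\<in>{..<length xs} \<times> {..<length xs}. if xs ! t < xs ! s then D s t else 0)"
    by (rule sum.mono_neutral_cong_left) (auto split: if_splits)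
  also have "\<dots> = (\<Sum>s<length xs. \<Sum>t<length xs. if xs ! t < xs ! s then D s t else (0::real))"
    by (simp add: sum.cartesian_product)
  finally show ?thesis using 1 by simp
qed

lemma cond_exp_Tsum:
  assumes xs: "xs \<in> multiset_perms h ns" and pos: "\<forall>a\<in>{1..h}. ns a > 0"
  shows "cond_exp_diff h ns xs = Tsum xs / (real (length xs - 1) * Zconst h ns)"
proof -
  let ?P = "{(a, b). a \<in> {1..h} \<and> b \<in> {1..h} \<and> b < a}"
  have set: "set xs \<subseteq> {1..h}" using xs by (simp add: multiset_perms_def)
  have inner: "(\<Sum>(a, b)\<in>?P. (real (ns a) * real (ns b) / Zconst h ns) *
          (\<Sum>s\<in>positions xs a. \<Sum>t\<in>positions xs b. (1 / (real (ns a) * real (ns b))) *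
             (real (des (pi_star xs i s t)) - real (des xs))))
      = (1 / Zconst h ns) * (\<Sum>s<length xs. \<Sum>t<length xs. if xs ! t < xs ! s then Dl xs i s t else 0)" for i
  proof -
    have "(\<Sum>(a, b)\<in>?P. (real (ns a) * real (ns b) / Zconst h ns) *
          (\<Sum>s\<in>positions xs a. \<Sum>t\<in>positions xs b. (1 / (real (ns a) * real (ns b))) *
             (real (des (pi_star xs i s t)) - real (des xs))))
        = (\<Sum>(a, b)\<in>?P. (1 / Zconst h ns) * (\<Sum>s\<in>positions xs a. \<Sum>t\<in>positions xs b. Dl xs i s t))"
    proof (rule sum.cong[OF refl])
      fix y assume y: "y \<in> ?P"
      obtain a b where ab: "y = (a, b)" by (cases y)
      have pa: "real (ns a) > 0" "real (ns b) > 0" using y pos by (auto simp: ab)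
      show "(case y of (a, b) \<Rightarrow> (real (ns a) * real (ns b) / Zconst h ns) *
          (\<Sum>s\<in>positions xs a. \<Sum>t\<in>positions xs b. (1 / (real (ns a) * real (ns b))) *
             (real (des (pi_star xs i s t)) - real (des xs))))
          = (case y of (a, b) \<Rightarrow> (1 / Zconst h ns) * (\<Sum>s\<in>positions xs a. \<Sum>t\<in>positions xs b. Dl xs i s t))"
        using pa by (simp add: ab sum_divide_distrib[symmetric] Dl_def)
    qed
    also have "\<dots> = (1 / Zconst h ns) * (\<Sum>(a, b)\<in>?P. \<Sum>s\<in>positions xs a. \<Sum>t\<in>positions xs b. Dl xs i s t)"
      by (simp add: sum_distrib_left case_prod_unfold)
    also have "\<dots> = (1 / Zconst h ns) * (\<Sum>s<length xs. \<Sum>t<length xs. if xs ! t < xs ! s then Dl xs i s t else 0)"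
      by (simp only: pair_reindex[OF set])
    finally show ?thesis .
  qed
  have "cond_exp_diff h ns xs = (\<Sum>i\<in>{0..<length xs - 1}. (1 / real (length xs - 1)) * ((1 / Zconst h ns) *
      (\<Sum>s<length xs. \<Sum>t<length xs. if xs ! t < xs ! s then Dl xs i s t else 0)))"
    unfolding cond_exp_diff_def inner ..
  also have "\<dots> = Tsum xs / (real (length xs - 1) * Zconst h ns)"
    by (simp only: sum_scale Tsum_def atLeast0LessThan)
  finally show ?thesis .
qed



lemma exists_perm: "\<exists>xs. set xs \<subseteq> {1..(h::nat)} \<and> (\<forall>a\<in>{1..h}. count (mset xs) a = ns a) \<and> length xs = (\<Sum>a=1..h. ns a)"
proof (induction h)
  case 0 then show ?case by auto
next
  case (Suc h)
  then obtain xs where xs: "set xs \<subseteq> {1..h}" "\<forall>a\<in>{1..h}. count (mset xs) a = ns a" "length xs = (\<Sum>a=1..h. ns a)"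
    by blast
  let ?ys = "xs @ replicate (ns (Suc h)) (Suc h)"
  have "set ?ys \<subseteq> {1..Suc h}" using xs(1) by auto
  moreover have "\<forall>a\<in>{1..Suc h}. count (mset ?ys) a = ns a"
  proof
    fix a assume a: "a \<in> {1..Suc h}"
    show "count (mset ?ys) a = ns a"
    proof (cases "a = Suc h")
      case True
      have "Suc h \<notin> set xs" using xs(1) by auto
      then have "count (mset xs) (Suc h) = 0" by (simp add: count_mset_0_iff)
      then show ?thesis using True by simp
    next
      case False
      then have "a \<in> {1..h}" using a by auto
      then show ?thesis using xs(2) False by simp
    qed
  qed
  moreover have "length ?ys = (\<Sum>a=1..Suc h. ns a)" using xs(3) by simp
  ultimately show ?case by blast
qed

lemma mp_eq:
  assumes x0: "x0 \<in> multiset_perms h ns"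
  shows "multiset_perms h ns = permutations_of_multiset (mset x0)"
proof -
  have s0: "set x0 \<subseteq> {1..h}" and c0: "\<forall>a\<in>{1..h}. count (mset x0) a = ns a"
    using x0 by (auto simp: multiset_perms_def)
  have "xs \<in> multiset_perms h ns \<longleftrightarrow> mset xs = mset x0" for xs
  proof
    assume xs: "xs \<in> multiset_perms h ns"
    have s: "set xs \<subseteq> {1..h}" and c: "\<forall>a\<in>{1..h}. count (mset xs) a = ns a"
      using xs by (auto simp: multiset_perms_def)
    show "mset xs = mset x0"
    proof (rule multiset_eqI)
      fix a show "count (mset xs) a = count (mset x0) a"
      proof (cases "a \<in> {1..h}")
        case True then show ?thesis using c c0 by simp
      next
        case False
        then have "a \<notin> set xs" "a \<notin> set x0" using s s0 by auto
        then show ?thesis by (metis count_mset_0_iff)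
      qed
    qed
  next
    assume m: "mset xs = mset x0"
    then have "set xs = set x0" by (metis set_mset_mset)
    then show "xs \<in> multiset_perms h ns" using s0 c0 m by (simp add: multiset_perms_def)
  qed
  then show ?thesis by (auto simp: permutations_of_multiset_def)
qed

lemma variance_SS:
  assumes "finite S" "S \<noteq> {}"
  shows "measure_pmf.variance (pmf_of_set S) f = SS S f / card S"
  using assms by (simp add: integral_pmf_of_set SS_def avg_def)

theorem lemma2p15:
  "\<exists>C::real. \<forall>(h::nat) (ns::nat \<Rightarrow> nat).
     h \<ge> 2 \<longrightarrow> (\<forall>a\<in>{1..h}. ns a > 0) \<longrightarrow> (\<Sum>a=1..h. ns a) \<ge> 4 \<longrightarrow>
     (let n = real (\<Sum>a=1..h. ns a) in
      measure_pmf.variance (pmf_of_set (multiset_perms h ns)) (cond_exp_diff h ns)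
        \<le> C * n ^ 5 / (n ^ 2 * (n ^ 2 - (\<Sum>a=1..h. real (ns a) ^ 2)) ^ 2))"
proof (rule exI[of _ 1638400], intro allI impI)
  fix h :: nat and ns :: "nat \<Rightarrow> nat"
  assume h2: "h \<ge> 2" and pos: "\<forall>a\<in>{1..h}. ns a > 0" and n4: "(\<Sum>a=1..h. ns a) \<ge> 4"
  define N where "N = (\<Sum>a=1..h. ns a)"
  define Z where "Z = Zconst h ns"
  define S where "S = multiset_perms h ns"
  define f where "f = cond_exp_diff h ns"
  define n where "n = real N"
  obtain x0 where x0: "set x0 \<subseteq> {1..h}" "\<forall>a\<in>{1..h}. count (mset x0) a = ns a" "length x0 = N"
    using exists_perm[of h ns] unfolding N_def by blast
  have x0S: "x0 \<in> S" using x0 by (simp add: S_def multiset_perms_def)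
  have Seq: "S = permutations_of_multiset (mset x0)" unfolding S_def by (rule mp_eq) (use x0S S_def in simp)
  have lenS: "length xs = N" if "xs \<in> S" for xs
  proof -
    have "mset xs = mset x0" using that Seq by (simp add: permutations_of_multiset_def)
    then show ?thesis using x0(3) by (metis size_mset)
  qed
  have N4: "N \<ge> 4" using n4 by (simp add: N_def)
  have Zpos: "Z > 0"
  proof -
    let ?P = "{(a, b). a \<in> {1..h} \<and> b \<in> {1..h} \<and> b < a}"
    have finP: "finite ?P" by (rule finite_subset[of _ "{1..h} \<times> {1..h}"]) auto
    have "(2, 1) \<in> ?P" using h2 by auto
    then have "?P \<noteq> {}" by blast
    moreover have "\<And>y. y \<in> ?P \<Longrightarrow> 0 < (case y of (a, b) \<Rightarrow> real (ns a) * real (ns b))"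
      using pos by auto
    ultimately show ?thesis unfolding Z_def Zconst_def by (intro sum_pos finP) auto
  qed
  have nsum: "n = (\<Sum>a=1..h. real (ns a))" by (simp add: n_def N_def)
  have hZ: "n ^ 2 - (\<Sum>a=1..h. real (ns a) ^ 2) = 2 * Z"
    using Zconst_eq[of h ns] by (simp add: Z_def nsum)
  define L where "L = 320 * n ^ 2 / (real (N - 1) * Z)"
  have N1: "real (N - 1) = n - 1" using N4 by (simp add: n_def of_nat_diff)
  have n4': "n \<ge> 4" using N4 by (simp add: n_def)
  have lip: "\<forall>xs p q. mset xs = mset x0 \<longrightarrow> p < N \<longrightarrow> q < N \<longrightarrow> \<bar>f xs - f (swap_pos xs p q)\<bar> \<le> L"
  proof (intro allI impI)
    fix xs p q assume m: "mset xs = mset x0" and p: "p < N" and q: "q < N"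
    have xsS: "xs \<in> S" using m Seq by (simp add: permutations_of_multiset_def)
    have lx: "length xs = N" using lenS xsS by simp
    have "mset (swap_pos xs p q) = mset xs" unfolding swap_pos_def using p q lx by (simp add: mset_swap)
    then have xs'S: "swap_pos xs p q \<in> S" using m Seq by (simp add: permutations_of_multiset_def)
    have D: "real (N - 1) * Z > 0" using Zpos N4 by simp
    have D': "(real N - 1) * Z > 0" using Zpos N4 by (intro mult_pos_pos) auto
    have "f xs - f (swap_pos xs p q) = (Tsum xs - Tsum (swap_pos xs p q)) / (real (N - 1) * Z)"
      unfolding f_def using cond_exp_Tsum[OF xsS[unfolded S_def] pos] cond_exp_Tsum[OF xs'S[unfolded S_def] pos]
      by (simp add: lx Z_def diff_divide_distrib)
    then have "\<bar>f xs - f (swap_pos xs p q)\<bar> = \<bar>Tsum xs - Tsum (swap_pos xs p q)\<bar> / (real (N - 1) * Z)"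
      using D D' by (simp add: abs_divide)
    also have "\<dots> \<le> 320 * n ^ 2 / (real (N - 1) * Z)"
      using T_lip[of p xs q] p q lx D by (simp add: divide_right_mono n_def)
    finally show "\<bar>f xs - f (swap_pos xs p q)\<bar> \<le> L" by (simp add: L_def)
  qed
  have SSb: "SS S f \<le> card S * N * L^2"
    using var_perm[of N, rule_format, of "mset x0" f L] lip x0(3) Seq by simp
  have finS: "finite S" and neS: "S \<noteq> {}" using Seq x0S by auto
  have cS: "card S > 0" using finS neS by (simp add: card_gt_0_iff)
  have "measure_pmf.variance (pmf_of_set S) f = SS S f / card S" by (rule variance_SS[OF finS neS])
  also have "\<dots> \<le> N * L^2" using SSb cS by (simp add: divide_le_eq mult.commute mult.left_commute)
  also have "\<dots> = 102400 * n ^ 3 / Z ^ 2 * (n ^ 2 / (n - 1) ^ 2)"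
    unfolding L_def N1 using Zpos n4'
    apply (simp add: n_def[symmetric] power_divide power_mult_distrib field_simps)
    apply algebra
    done
  also have "\<dots> \<le> 102400 * n ^ 3 / Z ^ 2 * 4"
  proof (rule mult_left_mono)
    have a: "(n - 2) * (3 * n - 2) \<ge> 0" using n4' by (intro mult_nonneg_nonneg) auto
    have b: "4 * (n - 1) ^ 2 - n ^ 2 = (n - 2) * (3 * n - 2)" by (simp add: power2_eq_square algebra_simps)
    have c: "(n - 1) ^ 2 > 0" using n4' by simp
    have "n ^ 2 \<le> 4 * (n - 1) ^ 2" using a b by linarith
    then show "n ^ 2 / (n - 1) ^ 2 \<le> 4" using c by (simp add: divide_le_eq)
    show "0 \<le> 102400 * n ^ 3 / Z ^ 2" using n4' by simp
  qed
  also have "\<dots> = 1638400 * n ^ 5 / (n ^ 2 * (2 * Z) ^ 2)"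
    using Zpos n4' by (simp add: field_simps power2_eq_square power3_eq_cube) algebra
  finally show "let n = real (\<Sum>a = 1..h. ns a)
       in measure_pmf.variance (pmf_of_set (multiset_perms h ns)) (cond_exp_diff h ns)
          \<le> 1638400 * n ^ 5 / (n ^ 2 * (n ^ 2 - (\<Sum>a = 1..h. real (ns a) ^ 2)) ^ 2)"
    unfolding Let_def hZ[unfolded n_def N_def] by (simp add: S_def f_def n_def N_def)
qed

end
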